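(* In the UDoG template described in the context, for any $t\ge0$ and any $\rho_t>0$, \[ \bar r_t\alpha_t\langle g_t,x_{t+1}-x^\star\rangle\le\frac{\bar r_t^2\alpha_t^2\rho_t}{2}\|g_t-m_t\|^2-\frac1{2\rho_t}\|x_{t+1}-y_t\|^2+\left(\frac1{2\rho_t}-\frac{\sqrt{\Gamma^x_t}}{2}\right)\left(\|x_{t+1}-y_t\|^2+\|x_{t+1}-y_{t+1}\|^2\right)+\frac{\sqrt{\Gamma^y_t}}{2}\left(\|y_t-x^\star\|^2-\|y_{t+1}-x^\star\|^2\right). \]
   Context: Norms are Euclidean, $\Pi_{\mathcal K}$ is Euclidean projection. $\mathcal K\subseteq\mathbb{R}^n$ closed convex, $f:\mathcal K\to\mathbb R$ convex with minimizer $x^\star$, and $\mathcal O$ a stochastic gradient oracle (any random vectors $m_t,g_t$ below). UDoG template: given $x_0\in\mathcal K$, $r_\epsilon>0$, set $y_0=x_0$; for $t=0,1,\dots$: $\bar r_t=\max_{k\le t}\max\{\|y_k-x_0\|,\|x_k-x_0\|,r_\epsilon\}$, $\alpha_t=\sum_{k=0}^t\bar r_k/\bar r_t$, $w_t=\alpha_t\bar r_t$; $\bar z_t=\frac{w_ty_t+\sum_{k=0}^{t-1}w_kx_{k+1}}{\sum_{k=0}^tw_k}$, $m_t\sim\mathcal O(\bar z_t)$, $x_{t+1}=\Pi_{\mathcal K}(y_t-\alpha_t\eta_{x,t}m_t)$; $\bar x_t=\frac{\sum_{k=0}^tw_kx_{k+1}}{\sum_{k=0}^tw_k}$, $g_t\sim\mathcal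 O(\bar x_t)$, $y_{t+1}=\Pi_{\mathcal K}(y_t-\alpha_t\eta_{y,t}g_t)$. Step sizes $\eta_{x,t}=\bar r_t/\sqrt{\Gamma^x_t}$, $\eta_{y,t}=\bar r_t/\sqrt{\Gamma^y_t}$ with $0<\Gamma^x_0\le\Gamma^y_0\le\Gamma^x_1\le\Gamma^y_1\le\cdots$. *)

theory Defs
  imports "HOL-Analysis.Analysis"
begin

definition udog_rbar :: "'a::euclidean_space \<Rightarrow> real \<Rightarrow> (nat \<Rightarrow> 'a) \<Rightarrow> (nat \<Rightarrow> 'a) \<Rightarrow> nat \<Rightarrow> real" where
  "udog_rbar x0 r_eps x y t =
     Max ((\<lambda>k. max (max (norm (y k - x0)) (norm (x k - x0))) r_eps) ` {..t})"

definition udog_alpha :: "'a::euclidean_space \<Rightarrow> real \<Rightarrow> (nat \<Rightarrow> 'a) \<Rightarrow> (nat \<Rightarrow> 'a) \<Rightarrow> nat \<Rightarrow> real" where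
  "udog_alpha x0 r_eps x y t =
     (\<Sum>k\<le>t. udog_rbar x0 r_eps x y k) / udog_rbar x0 r_eps x y t"

definition udog_w :: "'a::euclidean_space \<Rightarrow> real \<Rightarrow> (nat \<Rightarrow> 'a) \<Rightarrow> (nat \<Rightarrow> 'a) \<Rightarrow> nat \<Rightarrow> real" where
  "udog_w x0 r_eps x y t = udog_alpha x0 r_eps x y t * udog_rbar x0 r_eps x y t"

definition udog_zbar :: "'a::euclidean_space \<Rightarrow> real \<Rightarrow> (nat \<Rightarrow> 'a) \<Rightarrow> (nat \<Rightarrow> 'a) \<Rightarrow> nat \<Rightarrow> 'a" where
  "udog_zbar x0 r_eps x y t =
     (1 / (\<Sum>k\<le>t. udog_w x0 r_eps x y k)) *\<^sub>R
       (udog_w x0 r_eps x y t *\<^sub>R y t + (\<Sum>k<t. udog_w x0 r_eps x y k *\<^sub>R x (Suc k)))"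

definition udog_xbar :: "'a::euclidean_space \<Rightarrow> real \<Rightarrow> (nat \<Rightarrow> 'a) \<Rightarrow> (nat \<Rightarrow> 'a) \<Rightarrow> nat \<Rightarrow> 'a" where
  "udog_xbar x0 r_eps x y t =
     (1 / (\<Sum>k\<le>t. udog_w x0 r_eps x y k)) *\<^sub>R
       (\<Sum>k\<le>t. udog_w x0 r_eps x y k *\<^sub>R x (Suc k))"

text \<open>A run of the UDoG template with oracle outputs m t (queried at zbar t)
  and g t (queried at xbar t), which are arbitrary vectors.\<close>
definition udog_run ::
  "'a::euclidean_space set \<Rightarrow> 'a \<Rightarrow> real \<Rightarrow> (nat \<Rightarrow> real) \<Rightarrow> (nat \<Rightarrow> real)
    \<Rightarrow> (nat \<Rightarrow> 'a) \<Rightarrow> (nat \<Rightarrow> 'a) \<Rightarrow> (nat \<Rightarrow> 'a) \<Rightarrow> (nat \<Rightarrow> 'a) \<Rightarrow> bool" where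
  "udog_run K x0 r_eps Gx Gy m g x y \<longleftrightarrow>
     x 0 = x0 \<and> y 0 = x0 \<and>
     (\<forall>t. x (Suc t) = closest_point K
            (y t - (udog_alpha x0 r_eps x y t * (udog_rbar x0 r_eps x y t / sqrt (Gx t))) *\<^sub>R m t)) \<and>
     (\<forall>t. y (Suc t) = closest_point K
            (y t - (udog_alpha x0 r_eps x y t * (udog_rbar x0 r_eps x y t / sqrt (Gy t))) *\<^sub>R g t))"

end

theory Submission imports Defs begin

lemma proj_ineq:
  assumes "closed K" "convex K" "z \<in> K"
  shows "inner (v - closest_point K v) (z - closest_point K v) \<le> 0"
proof -
  have ne: "K \<noteq> {}" using assms by auto
  show ?thesis
    apply (rule any_closest_point_dot[OF assms(2,1)])
    using closest_point_in_set[OF assms(1) ne] closest_point_le[OF assms(1)] assms(3) by auto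
qed

lemma polar: "inner (a - b) (b - c) = ((norm (a - c))\<^sup>2 - (norm (b - c))\<^sup>2 - (norm (a - b))\<^sup>2) / 2"
  for a b c :: "'a::real_inner"
  by (simp add: power2_norm_eq_inner inner_diff_left inner_diff_right inner_commute algebra_simps)

lemma polar2: "inner (a - b) (c - b) = ((norm (a - b))\<^sup>2 + (norm (c - b))\<^sup>2 - (norm (a - c))\<^sup>2) / 2"
  for a b c :: "'a::real_inner"
  by (simp add: power2_norm_eq_inner inner_diff_left inner_diff_right inner_commute algebra_simps)

lemma young: "a * inner u v \<le> a\<^sup>2 * rho / 2 * (norm u)\<^sup>2 + 1 / (2*rho) * (norm v)\<^sup>2"
  if "rho > 0" for u v :: "'a::real_inner"
proof -
  have "a * inner u v \<le> \<bar>a\<bar> * norm u * norm v"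
  proof -
    have "a * inner u v = inner (a *\<^sub>R u) v" by simp
    also have "\<dots> \<le> norm (a *\<^sub>R u) * norm v" by (rule norm_cauchy_schwarz)
    finally show ?thesis by simp
  qed
  also have "\<dots> \<le> a\<^sup>2 * rho / 2 * (norm u)\<^sup>2 + 1 / (2*rho) * (norm v)\<^sup>2"
  proof -
    have "0 \<le> (rho * (\<bar>a\<bar> * norm u) - norm v)\<^sup>2" by simp
    hence "2 * rho * (\<bar>a\<bar> * norm u * norm v) \<le> rho\<^sup>2 * (\<bar>a\<bar> * norm u)\<^sup>2 + (norm v)\<^sup>2"
      by (simp add: power2_eq_square algebra_simps)
    hence "\<bar>a\<bar> * norm u * norm v \<le> (rho\<^sup>2 * (\<bar>a\<bar> * norm u)\<^sup>2 + (norm v)\<^sup>2) / (2*rho)"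
      using that by (simp add: field_simps)
    also have "\<dots> = a\<^sup>2 * rho / 2 * (norm u)\<^sup>2 + 1 / (2*rho) * (norm v)\<^sup>2"
      using that by (simp add: field_simps power2_eq_square)
    finally show ?thesis .
  qed
  finally show ?thesis .
qed

lemma alg:
  fixes y x' y' xs m g :: "'a::real_inner"
  assumes sx: "sx > 0" and sxy: "sx \<le> sy" and rho: "rho > 0"
    and px: "inner (y - (a / sx) *\<^sub>R m - x') (y' - x') \<le> 0"
    and py: "inner (y - (a / sy) *\<^sub>R g - y') (xs - y') \<le> 0"
  shows "a * inner g (x' - xs) \<le> a\<^sup>2 * rho / 2 * (norm (g - m))\<^sup>2
      - 1 / (2 * rho) * (norm (x' - y))\<^sup>2
      + (1 / (2 * rho) - sx / 2) * ((norm (x' - y))\<^sup>2 + (norm (x' - y'))\<^sup>2)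
      + sy / 2 * ((norm (y - xs))\<^sup>2 - (norm (y' - xs))\<^sup>2)"
proof -
  have sy: "sy > 0" using sx sxy by linarith
  have "inner (y - y') (xs - y') - (a / sy) * inner g (xs - y') \<le> 0"
    using py by (simp add: inner_diff_left)
  hence "sy * inner (y - y') (xs - y') - a * inner g (xs - y') \<le> 0"
    using sy by (simp add: field_simps)
  moreover have "inner (y - y') (xs - y') = - inner (y - y') (y' - xs)" "inner g (xs - y') = - inner g (y' - xs)"
    by (simp_all add: inner_diff_right)
  ultimately have h1: "a * inner g (y' - xs) \<le> sy * inner (y - y') (y' - xs)"
    by simp
  have "inner (y - x') (y' - x') - (a / sx) * inner m (y' - x') \<le> 0"
    using px by (simp add: inner_diff_left)
  hence "sx * inner (y - x') (y' - x') - a * inner m (y' - x') \<le> 0"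
    using sx by (simp add: field_simps)
  moreover have "inner m (y' - x') = - inner m (x' - y')"
    by (simp_all add: inner_diff_right)
  ultimately have h2: "a * inner m (x' - y') \<le> - sx * inner (y - x') (y' - x')"
    by simp
  have h3: "a * inner (g - m) (x' - y') \<le> a\<^sup>2 * rho / 2 * (norm (g - m))\<^sup>2 + 1 / (2*rho) * (norm (x' - y'))\<^sup>2"
    using young[OF rho] .
  have split: "a * inner g (x' - xs) = a * inner g (y' - xs) + a * inner m (x' - y') + a * inner (g - m) (x' - y')"
    by (simp add: inner_diff_left inner_diff_right algebra_simps)
  have e1: "inner (y - y') (y' - xs) = ((norm (y - xs))\<^sup>2 - (norm (y' - xs))\<^sup>2 - (norm (y - y'))\<^sup>2) / 2"
    by (rule polar)
  have e2: "inner (y - x') (y' - x') = ((norm (y - x'))\<^sup>2 + (norm (y' - x'))\<^sup>2 - (norm (y - y'))\<^sup>2) / 2"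
    by (rule polar2)
  have n1: "norm (y - x') = norm (x' - y)" "norm (y' - x') = norm (x' - y')" by (simp_all add: norm_minus_commute)
  have nn: "0 \<le> (norm (y - y'))\<^sup>2" by simp
  show ?thesis
    using h1 h2 h3 split e1 e2 n1 nn sxy
  proof -
    have "sx * (norm (y - y'))\<^sup>2 \<le> sy * (norm (y - y'))\<^sup>2" using sxy nn by (rule mult_right_mono)
    thus ?thesis using h1 h2 h3 split e1 e2 n1 by (simp add: algebra_simps del: inner_diff_left inner_diff_right)
  qed
qed

theorem lemma16:
  fixes K :: "'a::euclidean_space set" and f :: "'a \<Rightarrow> real"
    and x0 xstar :: 'a and r_eps :: real and Gx Gy :: "nat \<Rightarrow> real"
    and m g x y :: "nat \<Rightarrow> 'a" and t :: nat and rho :: real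
  assumes K: "closed K" "convex K" and x0K: "x0 \<in> K"
    and f: "convex_on K f" and xstar: "xstar \<in> K" "\<forall>z\<in>K. f xstar \<le> f z"
    and reps: "r_eps > 0"
    and G0: "0 < Gx 0" and Gmono: "\<forall>k. Gx k \<le> Gy k \<and> Gy k \<le> Gx (Suc k)"
    and run: "udog_run K x0 r_eps Gx Gy m g x y"
    and rho: "rho > 0"
  shows "udog_rbar x0 r_eps x y t * udog_alpha x0 r_eps x y t * inner (g t) (x (Suc t) - xstar)
    \<le> (udog_rbar x0 r_eps x y t)\<^sup>2 * (udog_alpha x0 r_eps x y t)\<^sup>2 * rho / 2 * (norm (g t - m t))\<^sup>2
      - 1 / (2 * rho) * (norm (x (Suc t) - y t))\<^sup>2
      + (1 / (2 * rho) - sqrt (Gx t) / 2) * ((norm (x (Suc t) - y t))\<^sup>2 + (norm (x (Suc t) - y (Suc t)))\<^sup>2)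
      + sqrt (Gy t) / 2 * ((norm (y t - xstar))\<^sup>2 - (norm (y (Suc t) - xstar))\<^sup>2)"
proof -
  define R where "R = udog_rbar x0 r_eps x y t"
  define A where "A = udog_alpha x0 r_eps x y t"
  have Gpos: "0 < Gx k" for k
  proof (induction k)
    case 0 show ?case using G0 .
  next
    case (Suc k)
    have "Gx k \<le> Gx (Suc k)" using Gmono[rule_format, of k] by linarith
    thus ?case using Suc by linarith
  qed
  have sx: "sqrt (Gx t) > 0" using Gpos by simp
  have sxy: "sqrt (Gx t) \<le> sqrt (Gy t)" using Gmono by simp
  have ne: "K \<noteq> {}" using x0K by auto
  have xs: "x (Suc t) = closest_point K (y t - ((R * A) / sqrt (Gx t)) *\<^sub>R m t)"
    using run unfolding udog_run_def R_def A_def by (simp add: mult.commute)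
  have ys: "y (Suc t) = closest_point K (y t - ((R * A) / sqrt (Gy t)) *\<^sub>R g t)"
    using run unfolding udog_run_def R_def A_def by (simp add: mult.commute)
  have yK: "y (Suc t) \<in> K" using ys closest_point_in_set[OF K(1) ne] by simp
  have px: "inner (y t - ((R * A) / sqrt (Gx t)) *\<^sub>R m t - x (Suc t)) (y (Suc t) - x (Suc t)) \<le> 0"
    unfolding xs by (rule proj_ineq[OF K yK])
  have py: "inner (y t - ((R * A) / sqrt (Gy t)) *\<^sub>R g t - y (Suc t)) (xstar - y (Suc t)) \<le> 0"
    unfolding ys by (rule proj_ineq[OF K xstar(1)])
  have "R * A * inner (g t) (x (Suc t) - xstar) \<le> (R * A)\<^sup>2 * rho / 2 * (norm (g t - m t))\<^sup>2
      - 1 / (2 * rho) * (norm (x (Suc t) - y t))\<^sup>2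
      + (1 / (2 * rho) - sqrt (Gx t) / 2) * ((norm (x (Suc t) - y t))\<^sup>2 + (norm (x (Suc t) - y (Suc t)))\<^sup>2)
      + sqrt (Gy t) / 2 * ((norm (y t - xstar))\<^sup>2 - (norm (y (Suc t) - xstar))\<^sup>2)"
    by (rule alg[OF sx sxy rho px py])
  thus ?thesis unfolding R_def A_def by (simp add: power_mult_distrib)
qed

end
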